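(* The average-case quantum query complexity of the Search problem under the uniform distribution on $\{0,\dots,m-1\}^n$ satisfies $Q_{\mathcal U}(\mathrm{Search})\ge\sqrt{m/15}-\sqrt{1/5}$.
   Context: Let $m\ge2$, $\Sigma=\{0,\dots,m-1\}$. The Search problem: given $x\in\Sigma^n$, output an index $i\in\{1,\dots,n\}$ with $x_i=1$. Query model: the algorithm space has orthonormal basis $|i,b\rangle$, $i\in\{1,\dots,n\}$, $b\in\Sigma$; the oracle is $O_x|i,b\rangle=|i,b+x_i\bmod m\rangle$ (equivalently the phase oracle $|i,b\rangle\mapsto e^{2\pi\mathbf i bx_i/m}|i,b\rangle$). A memoryless $T$-query algorithm is a sequence of unitaries $U_0,\dots,U_T$ on this space with final state $U_TO_x\cdots U_1O_xU_0|\mathrm{init}\rangle$ for a fixed basis state $|\mathrm{init}\rangle$; its output is the index obtained by measuring the index register of the final state. $Q_{\mathcal U}(\mathrm{Search})$ is the smallest $T$ such that some $T$-query algorithm, on input $x$ drawn uniformly from $\Sigma^n$, outputs an $i$ with $x_i=1$ with probability at least $2/3$ (probability over both $x$ and the measurement). *)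

theory Defs
  imports Complex_Main "HOL-Library.FuncSet"
begin

(* Basis states |i,b> are pairs (i,b) with i < n (index register, 0-based:
  i stands for index i+1) and b < m (symbol register). *)

type_synonym qstate = "nat \<times> nat \<Rightarrow> complex"
type_synonym qop = "nat \<times> nat \<Rightarrow> nat \<times> nat \<Rightarrow> complex"
  (* matrix: entry U p q = <p|U|q> *)

definition basis :: "nat \<Rightarrow> nat \<Rightarrow> (nat \<times> nat) set" where
  "basis n m = {0..<n} \<times> {0..<m}"

definition ket :: "nat \<times> nat \<Rightarrow> qstate" where
  "ket p = (\<lambda>q. if q = p then 1 else 0)"

definition apply_op :: "nat \<Rightarrow> nat \<Rightarrow> qop \<Rightarrow> qstate \<Rightarrow> qstate" where
  "apply_op n m U \<psi> = (\<lambda>p. \<Sum>q\<in>basis n m. U p q * \<psi> q)"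

(* Unitarity of a matrix on the space spanned by the basis
  (orthonormal columns; in finite dimension equivalent to unitarity). *)
definition unitary_on :: "nat \<Rightarrow> nat \<Rightarrow> qop \<Rightarrow> bool" where
  "unitary_on n m U \<longleftrightarrow>
     (\<forall>p\<in>basis n m. \<forall>q\<in>basis n m.
        (\<Sum>k\<in>basis n m. cnj (U k p) * U k q) = (if p = q then 1 else 0))"

definition orc :: "nat \<Rightarrow> (nat \<Rightarrow> nat) \<Rightarrow> qop" where
  "orc m x = (\<lambda>(i', b') (i, b). if i' = i \<and> b' = (b + x i) mod m then 1 else 0)"

(* Final state U_T O_x ... U_1 O_x U_0 |init> of the algorithm (U0, Us),
  Us = [U_1, ..., U_T]. *)
definition final_state :: "nat \<Rightarrow> nat \<Rightarrow> (nat \<Rightarrow> nat) \<Rightarrow> qop \<Rightarrow> qop list \<Rightarrow> nat \<times> nat \<Rightarrow> qstate" where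
  "final_state n m x U0 Us init =
     foldl (\<lambda>\<psi> U. apply_op n m U (apply_op n m (orc m x) \<psi>))
           (apply_op n m U0 (ket init)) Us"

definition success_prob :: "nat \<Rightarrow> nat \<Rightarrow> (nat \<Rightarrow> nat) \<Rightarrow> qstate \<Rightarrow> real" where
  "success_prob n m x \<psi> = (\<Sum>(i, b)\<in>{(i, b) \<in> basis n m. x i = 1}. (cmod (\<psi> (i, b)))\<^sup>2)"

definition avg_success :: "nat \<Rightarrow> nat \<Rightarrow> qop \<Rightarrow> qop list \<Rightarrow> nat \<times> nat \<Rightarrow> real" where
  "avg_success n m U0 Us init =
     (\<Sum>x\<in>PiE {0..<n} (\<lambda>_. {0..<m}). success_prob n m x (final_state n m x U0 Us init))
       / real m ^ n"

definition query_alg :: "nat \<Rightarrow> nat \<Rightarrow> nat \<Rightarrow> qop \<Rightarrow> qop list \<Rightarrow> nat \<times> nat \<Rightarrow> bool" where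
  "query_alg n m T U0 Us init \<longleftrightarrow>
     length Us = T \<and> init \<in> basis n m \<and> unitary_on n m U0 \<and> (\<forall>U\<in>set Us. unitary_on n m U)"

end

theory Submission
  imports Defs "HOL-Analysis.L2_Norm"
begin

definition nrm :: "nat \<Rightarrow> nat \<Rightarrow> qstate \<Rightarrow> real" where
  "nrm n m \<psi> = L2_set (\<lambda>p. cmod (\<psi> p)) (basis n m)"

definition rown :: "nat \<Rightarrow> qstate \<Rightarrow> nat \<Rightarrow> real" where
  "rown m \<psi> i = L2_set (\<lambda>b. cmod (\<psi> (i,b))) {0..<m}"

lemma finite_basis[simp]: "finite (basis n m)" by (simp add: basis_def)

lemma nrm_triangle: "nrm n m (\<lambda>p. a p + b p) \<le> nrm n m a + nrm n m b"
  unfolding nrm_def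
  by (rule order_trans[OF L2_set_mono L2_set_triangle_ineq]) (auto intro: norm_triangle_ineq)

lemma nrm_diff: "nrm n m (\<lambda>p. a p - b p) \<le> nrm n m a + nrm n m b"
  unfolding nrm_def
  by (rule order_trans[OF L2_set_mono L2_set_triangle_ineq]) (auto intro: norm_triangle_ineq4)

lemma rown_triangle: "rown m (\<lambda>p. a p + b p) i \<le> rown m a i + rown m b i"
  unfolding rown_def
  by (rule order_trans[OF L2_set_mono L2_set_triangle_ineq]) (auto intro: norm_triangle_ineq)

lemma rown_nonneg[simp]: "0 \<le> rown m \<psi> i" by (simp add: rown_def)

lemma nrm_nonneg[simp]: "0 \<le> nrm n m \<psi>" by (simp add: nrm_def)

lemma nrm_rown: "nrm n m \<psi> = L2_set (rown m \<psi>) {0..<n}"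
proof -
  have "(\<Sum>p\<in>basis n m. (cmod (\<psi> p))\<^sup>2) = (\<Sum>i\<in>{0..<n}. (rown m \<psi> i)\<^sup>2)"
    unfolding basis_def rown_def L2_set_def
    by (simp add: sum_nonneg sum.cartesian_product)
  then show ?thesis unfolding nrm_def L2_set_def by simp
qed

lemma rown_le_nrm: "i < n \<Longrightarrow> rown m \<psi> i \<le> nrm n m \<psi>"
  unfolding nrm_rown by (rule member_le_L2_set) auto

lemma nrm_restrict: "i < n \<Longrightarrow> nrm n m (\<lambda>p. if fst p = i then \<psi> p else 0) = rown m \<psi> i"
proof -
  assume i: "i < n"
  have r: "rown m (\<lambda>p. if fst p = i then \<psi> p else 0) j = (if j = i then rown m \<psi> i else 0)" for j
    unfolding rown_def by (auto simp: L2_set_def)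
  have "nrm n m (\<lambda>p. if fst p = i then \<psi> p else 0) = L2_set (\<lambda>j. if j = i then rown m \<psi> i else 0) {0..<n}"
    unfolding nrm_rown by (intro L2_set_cong) (simp_all only: r)
  also have "\<dots> = rown m \<psi> i" using i
    by (simp add: L2_set_def if_distrib[of "\<lambda>x. x^2"] cong: if_cong)
  finally show ?thesis .
qed

lemma apply_op_diff: "apply_op n m U (\<lambda>q. a q - b q) p = apply_op n m U a p - apply_op n m U b p"
  by (simp add: apply_op_def algebra_simps sum_subtractf)

lemma apply_op_add: "apply_op n m U (\<lambda>q. a q + b q) p = apply_op n m U a p + apply_op n m U b p"
  by (simp add: apply_op_def algebra_simps sum.distrib)

lemma unitary_nrm:
  assumes U: "unitary_on n m U"
  shows "nrm n m (apply_op n m U \<psi>) = nrm n m \<psi>"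
proof -
  let ?B = "basis n m"
  let ?A = "apply_op n m U \<psi>"
  have "complex_of_real (\<Sum>p\<in>?B. (cmod (?A p))\<^sup>2) = (\<Sum>p\<in>?B. cnj (?A p) * ?A p)"
    unfolding of_real_sum by (rule sum.cong[OF refl], subst complex_norm_square, rule mult.commute)
  also have "\<dots> = (\<Sum>p\<in>?B. \<Sum>q\<in>?B. \<Sum>r\<in>?B. (cnj (\<psi> q) * \<psi> r) * (cnj (U p q) * U p r))"
    by (simp add: apply_op_def sum_product algebra_simps) (rule sum.cong[OF refl], rule sum.swap)
  also have "\<dots> = (\<Sum>q\<in>?B. \<Sum>p\<in>?B. \<Sum>r\<in>?B. (cnj (\<psi> q) * \<psi> r) * (cnj (U p q) * U p r))"
    by (rule sum.swap)
  also have "\<dots> = (\<Sum>q\<in>?B. \<Sum>r\<in>?B. \<Sum>p\<in>?B. (cnj (\<psi> q) * \<psi> r) * (cnj (U p q) * U p r))"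
    by (rule sum.cong[OF refl], rule sum.swap)
  also have "\<dots> = (\<Sum>q\<in>?B. \<Sum>r\<in>?B. (cnj (\<psi> q) * \<psi> r) * (if q = r then 1 else 0))"
    using U unfolding unitary_on_def by (simp add: sum_distrib_left[symmetric])
  also have "\<dots> = (\<Sum>q\<in>?B. cnj (\<psi> q) * \<psi> q)"
    by (simp add: if_distrib cong: if_cong)
  also have "\<dots> = complex_of_real (\<Sum>p\<in>?B. (cmod (\<psi> p))\<^sup>2)"
    unfolding of_real_sum by (rule sum.cong[OF refl], subst complex_norm_square, rule mult.commute)
  finally have "(\<Sum>p\<in>?B. (cmod (?A p))\<^sup>2) = (\<Sum>p\<in>?B. (cmod (\<psi> p))\<^sup>2)"
    using of_real_eq_iff by blast
  then show ?thesis unfolding nrm_def L2_set_def by simp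
qed

lemma mod_inj_aux:
  fixes b b' c m :: nat
  assumes "b < m" "b' < m" "(b + c) mod m = (b' + c) mod m"
  shows "b = b'"
proof -
  have "b mod m = b' mod m" using assms(3) using nat_mod_eq_iff by auto
  then show ?thesis using assms by simp
qed

lemma orc_unitary:
  assumes m: "0 < m"
  shows "unitary_on n m (orc m x)"
  unfolding unitary_on_def
proof (intro ballI)
  fix p q assume p: "p \<in> basis n m" and q: "q \<in> basis n m"
  define \<sigma> where "\<sigma> = (\<lambda>(i::nat, b::nat). (i, (b + x i) mod m))"
  have O: "orc m x k r = (if k = \<sigma> r then 1 else 0)" for k r
    unfolding orc_def \<sigma>_def by (auto split: prod.splits)
  have sp: "\<sigma> p \<in> basis n m" using p m unfolding \<sigma>_def basis_def by auto
  have inj: "\<sigma> p = \<sigma> q \<longleftrightarrow> p = q"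
    using p q mod_inj_aux unfolding \<sigma>_def basis_def by (auto split: prod.splits)
  have "(\<Sum>k\<in>basis n m. cnj (orc m x k p) * orc m x k q) = (\<Sum>k\<in>basis n m. if k = \<sigma> p then (if \<sigma> p = \<sigma> q then 1 else 0) else 0)"
    unfolding O by (intro sum.cong) auto
  also have "\<dots> = (if p = q then 1 else 0)" using sp inj by simp
  finally show "(\<Sum>k\<in>basis n m. cnj (orc m x k p) * orc m x k q) = (if p = q then 1 else 0)" .
qed

fun run :: "nat \<Rightarrow> nat \<Rightarrow> (nat \<Rightarrow> nat) \<Rightarrow> qop \<Rightarrow> qop list \<Rightarrow> nat \<times> nat \<Rightarrow> nat \<Rightarrow> qstate" where
  "run n m x U0 Us init 0 = apply_op n m U0 (ket init)"
| "run n m x U0 Us init (Suc t) = apply_op n m (Us ! t) (apply_op n m (orc m x) (run n m x U0 Us init t))"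

lemma run_foldl: "k \<le> length Us \<Longrightarrow> foldl (\<lambda>\<psi> U. apply_op n m U (apply_op n m (orc m x) \<psi>)) (apply_op n m U0 (ket init)) (take k Us) = run n m x U0 Us init k"
  by (induction k) (auto simp: take_Suc_conv_app_nth)

lemma final_run: "final_state n m x U0 Us init = run n m x U0 Us init (length Us)"
  using run_foldl[of "length Us" Us n m x U0 init] by (simp add: final_state_def)

lemma run_nrm:
  assumes "query_alg n m T U0 Us init" "m > 0" "t \<le> length Us"
  shows "nrm n m (run n m x U0 Us init t) = 1"
  using assms(3)
proof (induction t)
  case 0
  have "nrm n m (ket init) = 1"
  proof -
    have "init \<in> basis n m" using assms(1) by (simp add: query_alg_def)
    moreover have "(cmod (ket init p))\<^sup>2 = (if p = init then 1 else 0)" for p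
      by (simp add: ket_def)
    ultimately have "(\<Sum>p\<in>basis n m. (cmod (ket init p))\<^sup>2) = 1"
      by simp
    then show ?thesis by (simp add: nrm_def L2_set_def)
  qed
  then show ?case using assms(1) by (simp add: query_alg_def unitary_nrm)
next
  case (Suc t)
  then have "Us ! t \<in> set Us" by simp
  then have "unitary_on n m (Us ! t)" using assms(1) by (simp add: query_alg_def)
  then show ?case using Suc by (simp add: unitary_nrm orc_unitary assms(2))
qed

lemma orc_same_col: "y (fst r) = x (fst r) \<Longrightarrow> orc m y q r = orc m x q r"
  by (auto simp: orc_def split: prod.splits)

lemma orc_diff_restrict:
  assumes "\<forall>j. j \<noteq> i \<longrightarrow> y j = x j"
  shows "apply_op n m (orc m y) \<psi> q - apply_op n m (orc m x) \<psi> q =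
         apply_op n m (orc m y) (\<lambda>p. if fst p = i then \<psi> p else 0) q - apply_op n m (orc m x) (\<lambda>p. if fst p = i then \<psi> p else 0) q"
  unfolding apply_op_def sum_subtractf[symmetric]
proof (intro sum.cong refl)
  fix r
  show "orc m y q r * \<psi> r - orc m x q r * \<psi> r =
    orc m y q r * (if fst r = i then \<psi> r else 0) - orc m x q r * (if fst r = i then \<psi> r else 0)"
  proof (cases "fst r = i")
    case False
    then have "orc m y q r = orc m x q r" using assms by (intro orc_same_col) auto
    then show ?thesis using False by simp
  qed simp
qed

lemma hybrid:
  assumes qa: "query_alg n m T U0 Us init" and m: "m > 0" and i: "i < n"
    and yx: "\<forall>j. j \<noteq> i \<longrightarrow> y j = x j"
  shows "t \<le> length Us \<Longrightarrow> nrm n m (\<lambda>p. run n m y U0 Us init t p - run n m x U0 Us init t p)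
     \<le> 2 * (\<Sum>s<t. rown m (run n m x U0 Us init s) i)"
proof (induction t)
  case 0
  then show ?case by (simp add: nrm_def L2_set_def)
next
  case (Suc t)
  let ?a = "run n m y U0 Us init t" and ?b = "run n m x U0 Us init t"
  let ?Oy = "apply_op n m (orc m y)" and ?Ox = "apply_op n m (orc m x)"
  let ?c = "\<lambda>p. if fst p = i then ?b p else 0"
  have U: "unitary_on n m (Us ! t)" using qa Suc.prems by (simp add: query_alg_def)
  have IH: "nrm n m (\<lambda>p. ?a p - ?b p) \<le> 2 * (\<Sum>s<t. rown m (run n m x U0 Us init s) i)"
    using Suc by simp
  have "nrm n m (\<lambda>p. run n m y U0 Us init (Suc t) p - run n m x U0 Us init (Suc t) p)
      = nrm n m (apply_op n m (Us ! t) (\<lambda>q. ?Oy ?a q - ?Ox ?b q))"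
    by (rule arg_cong[where f="nrm n m"], rule ext, simp only: apply_op_diff run.simps)
  also have "\<dots> = nrm n m (\<lambda>q. ?Oy ?a q - ?Ox ?b q)" using U by (rule unitary_nrm)
  also have "(\<lambda>q. ?Oy ?a q - ?Ox ?b q) = (\<lambda>q. ?Oy (\<lambda>p. ?a p - ?b p) q + (?Oy ?c q - ?Ox ?c q))"
  proof (rule ext)
    fix q
    show "?Oy ?a q - ?Ox ?b q = ?Oy (\<lambda>p. ?a p - ?b p) q + (?Oy ?c q - ?Ox ?c q)"
      using orc_diff_restrict[OF yx, of n m ?b q] by (simp add: apply_op_diff algebra_simps)
  qed
  finally have e: "nrm n m (\<lambda>p. run n m y U0 Us init (Suc t) p - run n m x U0 Us init (Suc t) p)
      = nrm n m (\<lambda>q. ?Oy (\<lambda>p. ?a p - ?b p) q + (?Oy ?c q - ?Ox ?c q))" .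
  have t1: "nrm n m (\<lambda>q. ?Oy (\<lambda>p. ?a p - ?b p) q + (?Oy ?c q - ?Ox ?c q))
     \<le> nrm n m (?Oy (\<lambda>p. ?a p - ?b p)) + nrm n m (\<lambda>q. ?Oy ?c q - ?Ox ?c q)"
    by (rule nrm_triangle)
  have t2: "nrm n m (\<lambda>q. ?Oy ?c q - ?Ox ?c q) \<le> nrm n m (?Oy ?c) + nrm n m (?Ox ?c)"
    by (rule nrm_diff)
  have u1: "nrm n m (?Oy (\<lambda>p. ?a p - ?b p)) = nrm n m (\<lambda>p. ?a p - ?b p)"
    by (rule unitary_nrm[OF orc_unitary[OF m]])
  have u2: "nrm n m (?Oy ?c) = rown m ?b i"
    using unitary_nrm[OF orc_unitary[OF m]] nrm_restrict[OF i] by simp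
  have u3: "nrm n m (?Ox ?c) = rown m ?b i"
    using unitary_nrm[OF orc_unitary[OF m]] nrm_restrict[OF i] by simp
  show ?case using e t1 t2 u1 u2 u3 IH by simp
qed

lemma L2_set_sum_le: fixes k :: nat shows "L2_set (\<lambda>i. \<Sum>s<k. f s i) A \<le> (\<Sum>s<k. L2_set (f s) A)"
proof (induction k)
  case 0 then show ?case by (simp add: L2_set_def)
next
  case (Suc k)
  have "L2_set (\<lambda>i. \<Sum>s<Suc k. f s i) A = L2_set (\<lambda>i. (\<Sum>s<k. f s i) + f k i) A" by simp
  also have "\<dots> \<le> L2_set (\<lambda>i. \<Sum>s<k. f s i) A + L2_set (f k) A" by (rule L2_set_triangle_ineq)
  also have "\<dots> \<le> (\<Sum>s<k. L2_set (f s) A) + L2_set (f k) A" using Suc by simp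
  finally show ?case by simp
qed

lemma per_x:
  assumes qa: "query_alg n m T U0 Us init" and m: "m > 0"
  shows "(\<Sum>i\<in>{0..<n}. (rown m (run n m (x(i:=1)) U0 Us init (length Us)) i)\<^sup>2) \<le> (2 * real (length Us) + 1)\<^sup>2"
proof -
  let ?L = "length Us"
  let ?r = "\<lambda>z t. run n m z U0 Us init t"
  define g where "g i = rown m (?r x ?L) i + (\<Sum>s<?L. 2 * rown m (?r x s) i)" for i
  have b: "rown m (?r (x(i:=1)) ?L) i \<le> g i" if i: "i < n" for i
  proof -
    have 1: "rown m (?r (x(i:=1)) ?L) i \<le> rown m (?r x ?L) i + rown m (\<lambda>p. ?r (x(i:=1)) ?L p - ?r x ?L p) i"
      using rown_triangle[of m "?r x ?L" "\<lambda>p. ?r (x(i:=1)) ?L p - ?r x ?L p" i] by simp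
    have 2: "rown m (\<lambda>p. ?r (x(i:=1)) ?L p - ?r x ?L p) i \<le> nrm n m (\<lambda>p. ?r (x(i:=1)) ?L p - ?r x ?L p)"
      by (rule rown_le_nrm[OF i])
    have 3: "nrm n m (\<lambda>p. ?r (x(i:=1)) ?L p - ?r x ?L p) \<le> 2 * (\<Sum>s<?L. rown m (?r x s) i)"
      by (rule hybrid[OF qa m i]) auto
    show ?thesis using 1 2 3 by (simp add: g_def sum_distrib_left)
  qed
  have g0: "0 \<le> g i" for i by (simp add: g_def sum_nonneg)
  have "(\<Sum>i\<in>{0..<n}. (rown m (?r (x(i:=1)) ?L) i)\<^sup>2) \<le> (\<Sum>i\<in>{0..<n}. (g i)\<^sup>2)"
    by (intro sum_mono power_mono b) auto
  also have "\<dots> = (L2_set g {0..<n})\<^sup>2" by (simp add: L2_set_def sum_nonneg)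
  also have "\<dots> \<le> (2 * real ?L + 1)\<^sup>2"
  proof (rule power_mono)
    have a1: "L2_set g {0..<n} \<le> L2_set (rown m (?r x ?L)) {0..<n} + L2_set (\<lambda>i. \<Sum>s<?L. 2 * rown m (?r x s) i) {0..<n}"
      unfolding g_def by (rule L2_set_triangle_ineq)
    have a2: "L2_set (\<lambda>i. \<Sum>s<?L. 2 * rown m (?r x s) i) {0..<n} \<le> (\<Sum>s<?L. L2_set (\<lambda>i. 2 * rown m (?r x s) i) {0..<n})"
      by (rule L2_set_sum_le)
    have a3: "L2_set (\<lambda>i. 2 * rown m (?r x s) i) {0..<n} = 2" if "s < ?L" for s
    proof -
      have "L2_set (\<lambda>i. 2 * rown m (?r x s) i) {0..<n} = 2 * nrm n m (?r x s)"
        by (simp add: L2_set_right_distrib nrm_rown)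
      then show ?thesis using run_nrm[OF qa m, of s x] that by simp
    qed
    have a4: "L2_set (rown m (?r x ?L)) {0..<n} = 1"
      using run_nrm[OF qa m, of ?L x] by (simp add: nrm_rown)
    show "L2_set g {0..<n} \<le> 2 * real ?L + 1" using a1 a2 a4 a3 by simp
  qed simp
  finally show ?thesis .
qed

lemma success_rown: "success_prob n m x \<psi> = (\<Sum>i\<in>{0..<n}. if x i = 1 then (rown m \<psi> i)\<^sup>2 else 0)"
proof -
  have e: "{(i, b) \<in> basis n m. x i = 1} = {i\<in>{0..<n}. x i = 1} \<times> {0..<m}" by (auto simp: basis_def)
  have "success_prob n m x \<psi> = (\<Sum>i\<in>{i\<in>{0..<n}. x i = 1}. \<Sum>b\<in>{0..<m}. (cmod (\<psi> (i,b)))\<^sup>2)"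
    unfolding success_prob_def e by (simp add: sum.cartesian_product)
  also have "\<dots> = (\<Sum>i\<in>{i\<in>{0..<n}. x i = 1}. (rown m \<psi> i)\<^sup>2)"
    by (simp add: rown_def L2_set_def sum_nonneg)
  also have "\<dots> = (\<Sum>i\<in>{0..<n}. if x i = 1 then (rown m \<psi> i)\<^sup>2 else 0)"
    by (rule sum.inter_filter) simp
  finally show ?thesis .
qed

lemma count_fix:
  fixes f :: "(nat \<Rightarrow> nat) \<Rightarrow> real"
  assumes i: "i \<in> A" and fin: "finite A" and one: "(1::nat) \<in> S" and fS: "finite S"
  shows "(\<Sum>x\<in>PiE A (\<lambda>_. S). f (x(i:=1))) = real (card S) * (\<Sum>x\<in>{x\<in>PiE A (\<lambda>_. S). x i = 1}. f x)"
proof -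
  let ?X = "PiE A (\<lambda>_. S)"
  have fX: "finite ?X" using fin fS by (simp add: finite_PiE)
  have "(\<Sum>x\<in>?X. f (x(i:=1))) = (\<Sum>v\<in>S. \<Sum>x\<in>{x. x \<in> ?X \<and> x i = v}. f (x(i:=1)))"
    by (rule sum.group[symmetric]) (use fX fS i in \<open>auto simp: PiE_iff\<close>)
  also have "\<dots> = (\<Sum>v\<in>S. \<Sum>x\<in>{x\<in>?X. x i = 1}. f x)"
  proof (rule sum.cong[OF refl])
    fix v assume v: "v \<in> S"
    show "(\<Sum>x\<in>{x. x \<in> ?X \<and> x i = v}. f (x(i:=1))) = (\<Sum>x\<in>{x\<in>?X. x i = 1}. f x)"
    proof (rule sum.reindex_bij_witness[where i = "\<lambda>z. z(i:=v)" and j = "\<lambda>x. x(i:=1)"])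
      fix a assume "a \<in> {x. x \<in> ?X \<and> x i = v}"
      then show "a(i := 1, i := v) = a" by auto
    next
      fix a assume "a \<in> {x. x \<in> ?X \<and> x i = v}"
      then show "a(i := 1) \<in> {x\<in>?X. x i = 1}" using i one by (auto simp: PiE_iff extensional_def)
    next
      fix b assume "b \<in> {x\<in>?X. x i = 1}"
      then show "b(i := v, i := 1) = b" by auto
    next
      fix b assume "b \<in> {x\<in>?X. x i = 1}"
      then show "b(i := v) \<in> {x. x \<in> ?X \<and> x i = v}" using i v by (auto simp: PiE_iff extensional_def)
    qed simp
  qed
  also have "\<dots> = real (card S) * (\<Sum>x\<in>{x\<in>?X. x i = 1}. f x)" by simp
  finally show ?thesis .
qed

theorem proposition4p9:
  fixes n m T :: nat and U0 :: qop and Us :: "qop list" and init :: "nat \<times> nat"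
  assumes "m \<ge> 2"
    and "query_alg n m T U0 Us init"
    and "avg_success n m U0 Us init \<ge> 2 / 3"
  shows "real T \<ge> sqrt (real m / 15) - sqrt (1 / 5)"
proof -
  have m: "m > 0" using assms(1) by simp
  have TL: "T = length Us" using assms(2) by (simp add: query_alg_def)
  let ?X = "PiE {0..<n} (\<lambda>_. {0..<m})"
  let ?L = "length Us"
  let ?p = "\<lambda>x i. (rown m (run n m x U0 Us init ?L) i)\<^sup>2"
  have cnt: "(\<Sum>x\<in>{x\<in>?X. x i = 1}. ?p x i) = (\<Sum>x\<in>?X. ?p (x(i:=1)) i) / real m" if i: "i \<in> {0..<n}" for i
    using count_fix[of i "{0..<n}" "{0..<m}" "\<lambda>x. ?p x i"] i assms(1) m by simp
  have "(\<Sum>x\<in>?X. success_prob n m x (final_state n m x U0 Us init))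
      = (\<Sum>x\<in>?X. \<Sum>i\<in>{0..<n}. if x i = 1 then ?p x i else 0)"
    by (simp add: final_run success_rown)
  also have "\<dots> = (\<Sum>i\<in>{0..<n}. \<Sum>x\<in>?X. if x i = 1 then ?p x i else 0)" by (rule sum.swap)
  also have "\<dots> = (\<Sum>i\<in>{0..<n}. \<Sum>x\<in>{x\<in>?X. x i = 1}. ?p x i)"
    by (simp add: sum.inter_filter finite_PiE)
  also have "\<dots> = (\<Sum>i\<in>{0..<n}. (\<Sum>x\<in>?X. ?p (x(i:=1)) i) / real m)"
    using cnt by (rule sum.cong[OF refl])
  also have "\<dots> = (\<Sum>i\<in>{0..<n}. \<Sum>x\<in>?X. ?p (x(i:=1)) i) / real m"
    by (simp add: sum_divide_distrib)
  also have "\<dots> = (\<Sum>x\<in>?X. \<Sum>i\<in>{0..<n}. ?p (x(i:=1)) i) / real m"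
    by (subst sum.swap) (rule refl)
  also have "\<dots> \<le> (\<Sum>x\<in>?X. (2 * real ?L + 1)\<^sup>2) / real m"
    by (intro divide_right_mono sum_mono per_x[OF assms(2) m]) auto
  also have "\<dots> = real m ^ n * (2 * real ?L + 1)\<^sup>2 / real m"
    by (simp add: card_PiE)
  finally have S: "(\<Sum>x\<in>?X. success_prob n m x (final_state n m x U0 Us init)) \<le> real m ^ n * (2 * real ?L + 1)\<^sup>2 / real m" .
  have pos: "real m ^ n > 0" using m by simp
  have "avg_success n m U0 Us init \<le> (2 * real ?L + 1)\<^sup>2 / real m"
    unfolding avg_success_def using S pos by (simp add: divide_le_eq field_simps)
  with assms(3) have "2 / 3 \<le> (2 * real ?L + 1)\<^sup>2 / real m" by linarith
  then have key: "2 * real m \<le> 3 * (2 * real ?L + 1)\<^sup>2" using m by (simp add: field_simps)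
  define s where "s = sqrt (1/5 :: real)"
  have s2: "s\<^sup>2 = 1/5" unfolding s_def by simp
  have s1: "1/5 \<le> s" unfolding s_def by (rule real_le_rsqrt) (simp add: power2_eq_square)
  have "real m / 15 \<le> (real ?L + s)\<^sup>2"
  proof -
    let ?l = "real ?L"
    have e1: "(?l + s)\<^sup>2 = ?l * ?l + 2 * (?l * s) + s\<^sup>2" by (simp add: power2_eq_square algebra_simps)
    have e2: "(2 * ?l + 1)\<^sup>2 = 4 * (?l * ?l) + 4 * ?l + 1" by (simp add: power2_eq_square algebra_simps)
    have ls: "?l * (1/5) \<le> ?l * s" using s1 by (intro mult_left_mono) auto
    have ll: "0 \<le> ?l * ?l" by simp
    show ?thesis unfolding e1 s2 using key e2 ls ll by linarith
  qed
  then have "sqrt (real m / 15) \<le> real ?L + s"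
    using s1 by (simp add: real_sqrt_le_iff real_le_lsqrt)
  then show ?thesis using TL s_def by simp
qed

end
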